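(* Let $n>3$ and let $r$ be an integer with $r\equiv3\pmod4$ and $3\le r\le n$. Suppose that for every $0\le k<n$, $\mathbb{Z}_k$ is a $1$-Gray code for $\mathcal{Z}_k$ with $\mathrm{first}(\mathbb{Z}_k)=0(001)^\star$ and $\mathrm{last}(\mathbb{Z}_k)=(001)^\star$ (where $\mathbb{Z}_0=(\epsilon)$). Then: (i) if $r=3$, there is a $1$-Gray code $\Delta^3_n$ for $\mathcal{D}^3_n$ with first word $0010(001)^\star$ and last word $(001)^\star$; (ii) if $r=n-2$, there is a $1$-Gray code $\Delta^{n-2}_n$ for $\mathcal{D}^{n-2}_n\cup\mathcal{D}^{n-3}_n$ with first word $0^{n-4}1000$ and last word $0^{n-3}100$; (iii) if $r=n-1$, there is a $1$-Gray code $\Delta^{n-1}_n$ for $(\mathcal{D}^n_n\cup\mathcal{D}^{n-1}_n\cup\mathcal{D}^{n-2}_n)\setminus\{0^{n-1}1\}$ with first word $0^{n-3}100$ and last word $0^{n-2}10$; (iv) if $r=n$, there is a $1$-Gray code $\Delta^n_n$ for $\mathcal{D}^n_n\cup\mathcal{D}^{n-1}_n$ with first word $0^{n-2}10$ and last word $0^{n-1}1$; (v) if $r\notin\{3,n-2,n-1,n\}$, there is a $1$-Gray code $\Delta^r_n$ for $\mathcal{D}^r_n\cup\mathcal{D}^{r-1}_n$ with first word $0^{r-1}10(001)^\star$ and last word $0^{r-1}1(001)^\star$.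
   Context: A binary word is $1$-decreasing if for every maximal run of $0$s, of length $a>0$, together with the (possibly empty) maximal run of $1$s immediately following it, of length $b$, one has $a>b$. For $m\ge1$, $\mathcal{Z}_m$ is the set of $1$-decreasing words of length $m$ starting with $0$; $\mathcal{Z}_0=\{\epsilon\}$. For $3\le r\le n$, $\mathcal{D}^r_n=\bigcup_{j=1}^{\lfloor(r-1)/2\rfloor}0^{r-j}1^j\cdot\mathcal{Z}_{n-r}$, where $w\cdot\mathcal{A}=\{wa:a\in\mathcal{A}\}$. A $1$-Gray code for a set of equal-length words is an ordered list of all its elements, each once, with consecutive words differing in at most one position; $\mathrm{first}$ and $\mathrm{last}$ denote the first and last elements of a list. In a word of prescribed length (here $n$) written $u(001)^\star$, $(001)^\star$ denotes the prefix of $001001\cdots$ of the length needed to reach that total length. *)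

theory Defs
  imports Main
begin

text \<open>Binary words are bool lists: False = 0, True = 1.\<close>

definition one_decreasing :: "bool list \<Rightarrow> bool" where
  "one_decreasing w \<longleftrightarrow>
     (\<forall>u a b v. w = u @ replicate a False @ replicate b True @ v
        \<and> (u = [] \<or> last u = True) \<and> 0 < a
        \<and> (0 < b \<or> v = []) \<and> (v = [] \<or> hd v = False)
        \<longrightarrow> b < a)"

definition Zset :: "nat \<Rightarrow> bool list set" where
  "Zset m = (if m = 0 then {[]}
             else {w. length w = m \<and> hd w = False \<and> one_decreasing w})"

definition Dset :: "nat \<Rightarrow> nat \<Rightarrow> bool list set" where
  "Dset r n = (\<Union>j\<in>{1..(r - 1) div 2}.
                 {replicate (r - j) False @ replicate j True @ z | z. z \<in> Zset (n - r)})"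

definition hamming :: "bool list \<Rightarrow> bool list \<Rightarrow> nat" where
  "hamming u v = card {i. i < length u \<and> u ! i \<noteq> v ! i}"

definition gray1 :: "bool list list \<Rightarrow> bool list set \<Rightarrow> bool" where
  "gray1 L S \<longleftrightarrow> distinct L \<and> set L = S \<and>
     (\<forall>i. Suc i < length L \<longrightarrow>
        length (L ! i) = length (L ! Suc i) \<and> hamming (L ! i) (L ! Suc i) \<le> 1)"

text \<open>u(001)^* completed to total length n.\<close>
definition fill :: "bool list \<Rightarrow> nat \<Rightarrow> bool list" where
  "fill u n = u @ take (n - length u) (concat (replicate n [False, False, True]))"

end

theory Submission
  imports Defs
begin


lemma hamming_Cons: "hamming (a#u) (b#v) = (if a = b then 0 else 1) + hamming u v"
proof -
  have e: "{i. i < length (a#u) \<and> (a#u)!i \<noteq> (b#v)!i} = (if a = b then {} else {0}) \<union> Suc ` {i. i < length u \<and> u!i \<noteq> v!i}"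
    by (auto simp: nth_Cons' image_iff split: if_splits) (metis Suc_pred less_Suc_eq_0_disj less_Suc_eq_le nat.inject not_less0)+
  have f: "finite {i. i < length u \<and> u!i \<noteq> v!i}" by simp
  show ?thesis unfolding hamming_def e using f
    by (auto simp: card_image card_insert_if)
qed

lemma hamming_Nil[simp]: "hamming [] v = 0" by (simp add: hamming_def)

lemma hamming_same[simp]: "hamming u u = 0" by (simp add: hamming_def)

lemma hamming_append_same: "hamming (c@u) (c@v) = hamming u v"
  by (induction c) (simp_all add: hamming_Cons)

lemma hamming_one: "hamming (p@[x]@s) (p@[y]@s) \<le> 1"
  by (simp add: hamming_append_same hamming_Cons)

lemma hamming_sym: "length u = length v \<Longrightarrow> hamming u v = hamming v u"
  unfolding hamming_def by (metis)

definition adj :: "bool list \<Rightarrow> bool list \<Rightarrow> bool" where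
  "adj u v \<longleftrightarrow> length u = length v \<and> hamming u v \<le> 1"

lemma adj_sym: "adj u v \<Longrightarrow> adj v u"
  unfolding adj_def using hamming_sym by metis

lemma adj_one: "adj (p@[x]@s) (p@[y]@s)"
  unfolding adj_def using hamming_one by simp

lemma adj_app: "adj u v \<Longrightarrow> adj (c@u) (c@v)"
  unfolding adj_def by (simp add: hamming_append_same)

fun gp :: "bool list list \<Rightarrow> bool" where
  "gp [] = True" | "gp [x] = True" | "gp (x#y#xs) = (adj x y \<and> gp (y#xs))"

lemma gp_iff: "gp L \<longleftrightarrow> (\<forall>i. Suc i < length L \<longrightarrow> adj (L!i) (L!Suc i))"
proof (induction L rule: gp.induct)
  case (3 x y xs)
  have "(\<forall>i. Suc i < length (x#y#xs) \<longrightarrow> adj ((x#y#xs)!i) ((x#y#xs)!Suc i)) \<longleftrightarrow>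
        adj x y \<and> (\<forall>i. Suc i < length (y#xs) \<longrightarrow> adj ((y#xs)!i) ((y#xs)!Suc i))" (is "?A \<longleftrightarrow> ?B")
  proof
    assume A: ?A
    have "adj x y" using A[rule_format, of 0] by simp
    moreover have "\<forall>i. Suc i < length (y#xs) \<longrightarrow> adj ((y#xs)!i) ((y#xs)!Suc i)"
    proof (intro allI impI)
      fix i assume "Suc i < length (y#xs)"
      then show "adj ((y#xs)!i) ((y#xs)!Suc i)" using A[rule_format, of "Suc i"] by simp
    qed
    ultimately show ?B by blast
  next
    assume B: ?B
    show ?A
    proof (intro allI impI)
      fix i assume i: "Suc i < length (x#y#xs)"
      show "adj ((x#y#xs)!i) ((x#y#xs)!Suc i)"
      proof (cases i)
        case 0
        then show ?thesis using B by simp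
      next
        case (Suc l)
        then show ?thesis using B i by simp
      qed
    qed
  qed
  then show ?case using 3 by simp
qed auto

lemma gray1_iff: "gray1 L S \<longleftrightarrow> distinct L \<and> set L = S \<and> gp L"
  by (simp add: gray1_def gp_iff adj_def)

lemma gp_Cons: "gp (x # xs) \<longleftrightarrow> (xs \<noteq> [] \<longrightarrow> adj x (hd xs)) \<and> gp xs"
  by (cases xs) auto

lemma gp_append: "gp xs \<Longrightarrow> gp ys \<Longrightarrow> (xs \<noteq> [] \<Longrightarrow> ys \<noteq> [] \<Longrightarrow> adj (last xs) (hd ys)) \<Longrightarrow> gp (xs @ ys)"
  by (induction xs rule: gp.induct) (auto simp: gp_Cons)

lemma gp_rev: "gp xs \<Longrightarrow> gp (rev xs)"
proof (induction xs)
  case (Cons x xs)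
  have g: "gp xs" and a: "xs \<noteq> [] \<Longrightarrow> adj x (hd xs)" using Cons.prems by (auto simp: gp_Cons)
  show ?case unfolding rev.simps
    by (rule gp_append[OF Cons.IH[OF g]]) (use a adj_sym in \<open>auto simp: last_rev\<close>)
qed simp

lemma gp_map: "gp xs \<Longrightarrow> gp (map ((@) c) xs)"
  by (induction xs rule: gp.induct) (auto intro: adj_app)

lemma gp_tl: "gp xs \<Longrightarrow> gp (tl xs)"
  by (cases xs) (auto simp: gp_Cons)

definition pa :: "nat \<Rightarrow> nat \<Rightarrow> bool list" where
  "pa R j = replicate (R - j) False @ replicate j True"

lemma length_pa[simp]: "j \<le> R \<Longrightarrow> length (pa R j) = R" by (simp add: pa_def)

lemma adj_step: "Suc j \<le> R \<Longrightarrow> adj (pa R j @ z) (pa R (Suc j) @ z)"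
proof -
  assume a: "Suc j \<le> R"
  have "pa R j = replicate (R - Suc j) False @ [False] @ replicate j True"
    using a by (simp add: pa_def replicate_append_same Suc_diff_Suc[symmetric])
  moreover have "pa R (Suc j) = replicate (R - Suc j) False @ [True] @ replicate j True"
    by (simp add: pa_def)
  ultimately show ?thesis using adj_one[of "replicate (R - Suc j) False" False "replicate j True @ z" True]
    by simp
qed

lemma adj_rung: "j < R \<Longrightarrow> adj (pa R (Suc j) @ z) (pa (R-1) j @ (False # z))"
proof -
  assume a: "j < R"
  have "pa R (Suc j) = (replicate (R - Suc j) False @ replicate j True) @ [True] "
    by (simp add: pa_def replicate_append_same)
  moreover have "pa (R-1) j = replicate (R - Suc j) False @ replicate j True"
    by (simp add: pa_def)
  ultimately show ?thesis using adj_one[of "replicate (R - Suc j) False @ replicate j True" True z False]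
    by simp
qed

definition key :: "bool list \<Rightarrow> nat \<times> nat" where
  "key w = (length (takeWhile Not w), length (takeWhile id (dropWhile Not w)))"

lemma key_pa: "0 < j \<Longrightarrow> (z = [] \<or> hd z = False) \<Longrightarrow> key (pa R j @ z) = (R - j, j)"
proof -
  assume j: "0 < j" and z: "z = [] \<or> hd z = False"
  obtain i where i: "j = Suc i" using j by (cases j) auto
  have t: "takeWhile id z = []" using z by (cases z) auto
  have d: "dropWhile Not (replicate a False @ ys) = dropWhile Not ys" for a ys
    by (induction a) auto
  have t2: "takeWhile id (replicate a True @ ys) = replicate a True @ takeWhile id ys" for a ys
    by (induction a) auto
  have t3: "takeWhile Not (replicate a False @ True # ys) = replicate a False" for a ys
    by (induction a) auto
  show ?thesis using t unfolding key_def pa_def i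
    by (simp add: d t3 t2[of "Suc i", simplified])
qed

lemma take_cc: "t \<le> a \<Longrightarrow> t \<le> b \<Longrightarrow>
   take t (concat (replicate a [False,False,True])) = take t (concat (replicate b [False,False,True]))"
proof -
  have g: "take t (concat (replicate a [False,False,True])) = take t (concat (replicate b [False,False,True]))"
    if "t \<le> a" "a \<le> b" for a b
  proof -
    have "replicate b [False,False,True] = replicate a [False,False,True] @ replicate (b-a) [False,False,True]"
      using that by (metis le_add_diff_inverse replicate_add)
    then show ?thesis using that by (simp add: take_append length_concat sum_list_replicate)
  qed
  assume "t \<le> a" "t \<le> b"
  then show ?thesis using g by (metis nat_le_linear)
qed

lemma Zset_len: "z \<in> Zset k \<Longrightarrow> length z = k" by (auto simp: Zset_def split: if_splits)
lemma Zset_hd: "z \<in> Zset k \<Longrightarrow> z = [] \<or> hd z = False" by (auto simp: Zset_def split: if_splits)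



lemma key_seg: "0<j \<Longrightarrow> \<forall>z\<in>set xs. z = [] \<or> hd z = False \<Longrightarrow> w \<in> set (map ((@) (pa R j)) xs) \<Longrightarrow> key w = (R-j, j)"
  using key_pa by auto

lemma disjK: "(\<And>w. w \<in> A \<Longrightarrow> key w = a) \<Longrightarrow> (\<And>w. w \<in> B \<Longrightarrow> key w = b) \<Longrightarrow> a \<noteq> b \<Longrightarrow> A \<inter> B = {}"
  by auto

lemma disjKB: "(\<And>w. w \<in> A \<Longrightarrow> key w = a) \<Longrightarrow> (\<And>w. w \<in> B \<Longrightarrow> snd (key w) \<le> c) \<Longrightarrow> c < snd a \<Longrightarrow> A \<inter> B = {}"
  by fastforce

lemma distinct_app: "distinct (map ((@) c) xs) = distinct xs"
  by (simp add: distinct_map inj_on_def)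

fun blk :: "nat \<Rightarrow> bool list list \<Rightarrow> bool list list \<Rightarrow> nat \<Rightarrow> bool list list" where
  "blk r P P' 0 = []"
| "blk r P P' (Suc i) = map ((@) (pa (r-1) (2*i+2))) P' @ map ((@) (pa (r-1) (2*i+1))) (rev P')
     @ map ((@) (pa r (2*i+2))) (rev (tl P)) @ map ((@) (pa r (2*i+1))) (tl P) @ blk r P P' i"

lemma col:
  assumes "b \<le> R" "0 < a" "z = [] \<or> hd z = False"
  shows "gp (map (\<lambda>j. pa R j @ z) [a..<b]) \<and> distinct (map (\<lambda>j. pa R j @ z) [a..<b])"
  using assms(1)
proof (induction b)
  case 0
  then show ?case by simp
next
  case (Suc b)
  show ?case
  proof (cases "a \<le> b")
    case False
    then show ?thesis by simp
  next
    case True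
    have e: "[a..<Suc b] = [a..<b] @ [b]" using True by simp
    have IH: "gp (map (\<lambda>j. pa R j @ z) [a..<b])" "distinct (map (\<lambda>j. pa R j @ z) [a..<b])"
      using Suc by auto
    have g: "gp (map (\<lambda>j. pa R j @ z) [a..<Suc b])"
      unfolding e map_append
    proof (rule gp_append[OF IH(1)])
      show "gp (map (\<lambda>j. pa R j @ z) [b])" by simp
      assume "map (\<lambda>j. pa R j @ z) [a..<b] \<noteq> []"
      then have ab: "a < b" by simp
      then have l: "last (map (\<lambda>j. pa R j @ z) [a..<b]) = pa R (b-1) @ z" by (simp add: last_map)
      show "adj (last (map (\<lambda>j. pa R j @ z) [a..<b])) (hd (map (\<lambda>j. pa R j @ z) [b]))"
        unfolding l using adj_step[of "b-1" R z] ab Suc.prems by simp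
    qed
    have "pa R b @ z \<notin> (\<lambda>j. pa R j @ z) ` {a..<b}"
    proof
      assume "pa R b @ z \<in> (\<lambda>j. pa R j @ z) ` {a..<b}"
      then obtain j where j: "j \<in> {a..<b}" "pa R b @ z = pa R j @ z" by auto
      then have "key (pa R b @ z) = key (pa R j @ z)" by simp
      then show False using key_pa[of b z R] key_pa[of j z R] j assms by auto
    qed
    then have "distinct (map (\<lambda>j. pa R j @ z) [a..<Suc b])" using IH(2) unfolding e by simp
    then show ?thesis using g by simp
  qed
qed

locale setting =
  fixes r :: nat and P P' :: "bool list list"
  assumes gP: "gp P" and gP': "gp P'" and dP: "distinct P" and dP': "distinct P'"
    and hP: "\<forall>z\<in>set P. z = [] \<or> hd z = False" and hP': "\<forall>z\<in>set P'. z = [] \<or> hd z = False"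
    and lenP: "2 \<le> length P" and P'ne: "P' \<noteq> []"
    and hdP': "hd P' = False # last P"
begin

lemma hPt: "\<forall>z\<in>set (tl P). z = [] \<or> hd z = False"
  using hP by (cases P) auto

lemma tlne: "tl P \<noteq> []" using lenP by (cases P) auto

lemma last_tl: "last (tl P) = last P" using lenP by (cases P) (auto simp: last_ConsR)

lemma blk_props:
  assumes "2*i + 2 < r"
  shows "set (blk r P P' i) = (\<Union>j\<in>{1..2*i}. (@) (pa r j) ` set (tl P)) \<union> (\<Union>j\<in>{1..2*i}. (@) (pa (r-1) j) ` set P')
    \<and> gp (blk r P P' i) \<and> distinct (blk r P P' i)
    \<and> (0 < i \<longrightarrow> blk r P P' i \<noteq> [] \<and> hd (blk r P P' i) = pa (r-1) (2*i) @ hd P' \<and> last (blk r P P' i) = pa r 1 @ last P)"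
  using assms
proof (induction i)
  case 0
  then show ?case by simp
next
  case (Suc i)
  define S1 where "S1 = map ((@) (pa (r-1) (2*i+2))) P'"
  define S2 where "S2 = map ((@) (pa (r-1) (2*i+1))) (rev P')"
  define S3 where "S3 = map ((@) (pa r (2*i+2))) (rev (tl P))"
  define S4 where "S4 = map ((@) (pa r (2*i+1))) (tl P)"
  define B where "B = blk r P P' i"
  have IH: "set B = (\<Union>j\<in>{1..2*i}. (@) (pa r j) ` set (tl P)) \<union> (\<Union>j\<in>{1..2*i}. (@) (pa (r-1) j) ` set P')"
    "gp B" "distinct B" "0 < i \<Longrightarrow> B \<noteq> [] \<and> hd B = pa (r-1) (2*i) @ hd P' \<and> last B = pa r 1 @ last P"
    using Suc unfolding B_def by auto
  have eq: "blk r P P' (Suc i) = S1 @ S2 @ S3 @ S4 @ B"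
    by (simp add: S1_def S2_def S3_def S4_def B_def)
  have r: "2*i+4 < r" using Suc.prems by simp
  have k1: "w \<in> set S1 \<Longrightarrow> key w = (r-1-(2*i+2), 2*i+2)" for w
    unfolding S1_def using key_seg[where j="2*i+2" and R="r-1" and xs=P' and w=w] hP' by simp
  have k2: "w \<in> set S2 \<Longrightarrow> key w = (r-1-(2*i+1), 2*i+1)" for w
    unfolding S2_def using key_seg[where j="2*i+1" and R="r-1" and xs="rev P'" and w=w] hP' by simp
  have k3: "w \<in> set S3 \<Longrightarrow> key w = (r-(2*i+2), 2*i+2)" for w
    unfolding S3_def using key_seg[where j="2*i+2" and R=r and xs="rev (tl P)" and w=w] hPt by simp
  have k4: "w \<in> set S4 \<Longrightarrow> key w = (r-(2*i+1), 2*i+1)" for w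
    unfolding S4_def using key_seg[where j="2*i+1" and R=r and xs="tl P" and w=w] hPt by simp
  have kB: "w \<in> set B \<Longrightarrow> snd (key w) \<le> 2*i" for w
  proof -
    assume "w \<in> set B"
    then obtain j z where "j \<in> {1..2*i}" "(z \<in> set (tl P) \<and> w = pa r j @ z) \<or> (z \<in> set P' \<and> w = pa (r-1) j @ z)"
      unfolding IH(1) by blast
    then show ?thesis
    proof (elim disjE conjE)
      assume "j \<in> {1..2*i}" "z \<in> set (tl P)" "w = pa r j @ z"
      then show ?thesis using key_pa[of j z r] hPt by auto
    next
      assume "j \<in> {1..2*i}" "z \<in> set P'" "w = pa (r-1) j @ z"
      then show ?thesis using key_pa[of j z "r-1"] hP' by auto
    qed
  qed
  have dist: "distinct (S1 @ S2 @ S3 @ S4 @ B)"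
  proof -
    have "distinct S1" "distinct S2" "distinct S3" "distinct S4"
      unfolding S1_def S2_def S3_def S4_def using dP dP' by (auto simp: distinct_app distinct_tl)
    moreover have "set S1 \<inter> set S2 = {}" using disjK[OF k1 k2] r by auto
    moreover have "set S1 \<inter> set S3 = {}" using disjK[OF k1 k3] r by auto
    moreover have "set S1 \<inter> set S4 = {}" using disjK[OF k1 k4] r by auto
    moreover have "set S1 \<inter> set B = {}" using disjKB[OF k1 kB] r by auto
    moreover have "set S2 \<inter> set S3 = {}" using disjK[OF k2 k3] r by auto
    moreover have "set S2 \<inter> set S4 = {}" using disjK[OF k2 k4] r by auto
    moreover have "set S2 \<inter> set B = {}" using disjKB[OF k2 kB] r by auto
    moreover have "set S3 \<inter> set S4 = {}" using disjK[OF k3 k4] r by auto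
    moreover have "set S3 \<inter> set B = {}" using disjKB[OF k3 kB] r by auto
    moreover have "set S4 \<inter> set B = {}" using disjKB[OF k4 kB] r by auto
    ultimately show ?thesis using IH(3) by (simp add: Int_Un_distrib)
  qed
  have gps: "gp S1" "gp S2" "gp S3" "gp S4"
    unfolding S1_def S2_def S3_def S4_def using gP gP' by (auto intro: gp_map gp_rev gp_tl)
  have ne: "S1 \<noteq> []" "S2 \<noteq> []" "S3 \<noteq> []" "S4 \<noteq> []"
    unfolding S1_def S2_def S3_def S4_def using P'ne tlne by auto
  have t12: "adj (last S1) (hd S2)"
    unfolding S1_def S2_def using P'ne adj_sym[OF adj_step[of "2*i+1" "r-1" "last P'"]] r
    by (simp add: last_map hd_map hd_rev)
  have t23: "adj (last S2) (hd S3)"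
    unfolding S2_def S3_def using P'ne tlne adj_sym[OF adj_rung[of "2*i+1" r "last P"]] r
    by (simp add: last_map hd_map hd_rev last_rev hdP' last_tl)
  have t34: "adj (last S3) (hd S4)"
    unfolding S3_def S4_def using tlne adj_sym[OF adj_step[of "2*i+1" r "hd (tl P)"]] r
    by (simp add: last_map hd_map last_rev)
  have t4B: "0 < i \<Longrightarrow> adj (last S4) (hd B)"
    unfolding S4_def using tlne IH(4) adj_rung[of "2*i" r "last P"] r
    by (simp add: last_map last_tl hdP')
  have gpall: "gp (S1 @ S2 @ S3 @ S4 @ B)"
  proof -
    have "gp (S4 @ B)"
    proof (cases "i = 0")
      case True
      then show ?thesis using gps IH(2) by (simp add: B_def)
    next
      case False
      show ?thesis by (rule gp_append[OF gps(4) IH(2)]) (use t4B False in simp)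
    qed
    have "gp (S3 @ S4 @ B)" using \<open>gp (S4 @ B)\<close> by (rule gp_append[OF gps(3)]) (use t34 ne in \<open>simp add: hd_append2\<close>)
    then have "gp (S2 @ S3 @ S4 @ B)" by (rule gp_append[OF gps(2)]) (use t23 ne in \<open>simp add: hd_append2\<close>)
    then show "gp (S1 @ S2 @ S3 @ S4 @ B)" by (rule gp_append[OF gps(1)]) (use t12 ne in \<open>simp add: hd_append2\<close>)
  qed
  have setall: "set (S1 @ S2 @ S3 @ S4 @ B) = (\<Union>j\<in>{1..2*Suc i}. (@) (pa r j) ` set (tl P)) \<union> (\<Union>j\<in>{1..2*Suc i}. (@) (pa (r-1) j) ` set P')"
  proof -
    have "{1..2*Suc i} = {1..2*i} \<union> {2*i+1, 2*i+2}" by auto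
    then show ?thesis unfolding set_append IH(1) S1_def S2_def S3_def S4_def set_map set_rev
      by (simp add: UN_Un Un_ac)
  qed
  have hdl: "hd (S1 @ S2 @ S3 @ S4 @ B) = pa (r-1) (2*Suc i) @ hd P'"
    using ne P'ne unfolding S1_def by (simp add: hd_map)
  have lastl: "last (S1 @ S2 @ S3 @ S4 @ B) = pa r 1 @ last P"
  proof (cases "i = 0")
    case True
    then show ?thesis using tlne unfolding S4_def B_def by (simp add: last_map last_tl)
  next
    case False
    then show ?thesis using IH(4) by simp
  qed
  show ?case unfolding eq
    by (simp only: setall gpall dist hdl lastl ne(1) append_is_Nil_conv simp_thms zero_less_Suc)
qed

lemma sP: "set P = insert (hd P) (set (tl P))" using lenP by (cases P) auto

lemma hdP_notin: "hd P \<notin> set (tl P)" using dP lenP by (cases P) auto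

lemma caseV:
  assumes m: "2*h + 1 = m" and r: "r = 2*m + 1" and h: "0 < h"
  defines "L \<equiv> map (\<lambda>j. pa r j @ hd P) [1..<m+1] @ map ((@) (pa r m)) (tl P) @ blk r P P' h"
  shows "distinct L \<and> set L = (\<Union>j\<in>{1..m}. {pa r j @ z |z. z \<in> set P}) \<union> (\<Union>j\<in>{1..m-1}. {pa (r-1) j @ z |z. z \<in> set P'})
     \<and> gp L \<and> L \<noteq> [] \<and> hd L = pa r 1 @ hd P \<and> last L = pa r 1 @ last P"
proof -
  define C where "C = map (\<lambda>j. pa r j @ hd P) [1..<m+1]"
  define T where "T = map ((@) (pa r m)) (tl P)"
  define B where "B = blk r P P' h"
  have Leq: "L = C @ T @ B" unfolding L_def C_def T_def B_def by simp
  have hdP: "hd P = [] \<or> hd (hd P) = False" using hP lenP by (cases P) auto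
  have BP: "set B = (\<Union>j\<in>{1..2*h}. (@) (pa r j) ` set (tl P)) \<union> (\<Union>j\<in>{1..2*h}. (@) (pa (r-1) j) ` set P')"
    "gp B" "distinct B" "B \<noteq> []" "hd B = pa (r-1) (2*h) @ hd P'" "last B = pa r 1 @ last P"
    using blk_props[of h] m r h unfolding B_def by auto
  have Cp: "gp C" "distinct C" unfolding C_def using col[of "m+1" r 1 "hd P"] hdP r by auto
  have Tp: "gp T" "distinct T" unfolding T_def using gP dP by (auto intro: gp_map gp_tl simp: distinct_app distinct_tl)
  have CT: "set C \<inter> set T = {}"
  proof (rule ccontr)
    assume "set C \<inter> set T \<noteq> {}"
    then obtain w where w: "w \<in> set C" "w \<in> set T" by blast
    from w(1) obtain j where j1: "j \<in> set [1..<m+1]" "w = pa r j @ hd P" unfolding C_def set_map by blast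
    from w(2) obtain z where z1: "z \<in> set (tl P)" "w = pa r m @ z" unfolding T_def set_map by blast
    have j: "j \<in> {1..<m+1}" "z \<in> set (tl P)" "pa r j @ hd P = pa r m @ z" using j1 z1 by auto
    have "key (pa r j @ hd P) = key (pa r m @ z)" using j by simp
    then have "j = m" using key_pa[of j "hd P" r] key_pa[of m z r] hdP hPt j m by auto
    then show False using j hdP_notin by simp
  qed
  have CB: "set C \<inter> set B = {}"
  proof (rule ccontr)
    assume "set C \<inter> set B \<noteq> {}"
    then obtain w where w: "w \<in> set C" "w \<in> set B" by blast
    from w(1) obtain j where j1: "j \<in> set [1..<m+1]" "w = pa r j @ hd P" unfolding C_def set_map by blast
    have j: "j \<in> {1..<m+1}" "w \<in> set B" "w = pa r j @ hd P" using j1 w by auto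
    from j(2) obtain i z where i: "i \<in> {1..2*h}" "(z \<in> set (tl P) \<and> w = pa r i @ z) \<or> (z \<in> set P' \<and> w = pa (r-1) i @ z)"
      unfolding BP(1) by blast
    then show False
    proof (elim disjE conjE)
      assume z: "z \<in> set (tl P)" "w = pa r i @ z"
      have "key (pa r j @ hd P) = key (pa r i @ z)" using j z by simp
      then have "j = i" using key_pa[of j "hd P" r] key_pa[of i z r] hdP hPt j i z by auto
      then show False using j z hdP_notin by simp
    next
      assume z: "z \<in> set P'" "w = pa (r-1) i @ z"
      have "key (pa r j @ hd P) = key (pa (r-1) i @ z)" using j z by simp
      then show False using key_pa[of j "hd P" r] key_pa[of i z "r-1"] hdP hP' j i z m r by auto
    qed
  qed
  have TB: "set T \<inter> set B = {}"
  proof (rule ccontr)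
    assume "set T \<inter> set B \<noteq> {}"
    then obtain w where w: "w \<in> set T" "w \<in> set B" by blast
    from w(1) obtain z where z1: "z \<in> set (tl P)" "w = pa r m @ z" unfolding T_def set_map by blast
    have j: "z \<in> set (tl P)" "w \<in> set B" "w = pa r m @ z" using z1 w by auto
    from j(2) obtain i z' where i: "i \<in> {1..2*h}" "(z' \<in> set (tl P) \<and> w = pa r i @ z') \<or> (z' \<in> set P' \<and> w = pa (r-1) i @ z')"
      unfolding BP(1) by blast
    have k: "key w = (r - m, m)" using key_pa[of m z r] j hPt m by auto
    from i show False
    proof (elim disjE conjE)
      assume z: "z' \<in> set (tl P)" "w = pa r i @ z'"
      then show False using k key_pa[of i z' r] hPt i m by auto
    next
      assume z: "z' \<in> set P'" "w = pa (r-1) i @ z'"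
      then show False using k key_pa[of i z' "r-1"] hP' i m by auto
    qed
  qed
  have dist: "distinct L" unfolding Leq using Cp Tp BP CT CB TB by (simp add: Int_Un_distrib)
  have Cne: "C \<noteq> []" and Tne: "T \<noteq> []" unfolding C_def T_def using m tlne by auto
  have lastC: "last C = pa r m @ hd P" unfolding C_def using m by (simp add: last_map)
  have hdT: "hd T = pa r m @ hd (tl P)" unfolding T_def using tlne by (simp add: hd_map)
  have lastT: "last T = pa r m @ last P" unfolding T_def using tlne by (simp add: last_map last_tl)
  have aPP: "adj (hd P) (hd (tl P))" using gP lenP by (cases P rule: gp.cases) auto
  have gpL: "gp L" unfolding Leq
  proof (rule gp_append[OF Cp(1)])
    show "gp (T @ B)"
    proof (rule gp_append[OF Tp(1) BP(2)])
      show "adj (last T) (hd B)" unfolding lastT BP(5) hdP'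
        using adj_rung[of "2*h" r "last P"] m r by simp
    qed
    show "adj (last C) (hd (T @ B))" using Tne unfolding lastC by (simp add: hd_append2 hdT adj_app aPP)
  qed
  have setL: "set L = (\<Union>j\<in>{1..m}. {pa r j @ z |z. z \<in> set P}) \<union> (\<Union>j\<in>{1..m-1}. {pa (r-1) j @ z |z. z \<in> set P'})"
  proof -
    have e1: "{1..m} = insert m {1..2*h}" using m by auto
    have e2: "m - 1 = 2*h" using m by simp
    have s1: "(\<Union>j\<in>{1..m}. {pa r j @ z |z. z \<in> set P}) = (\<lambda>j. pa r j @ hd P) ` {1..m} \<union> (\<Union>j\<in>{1..m}. (@) (pa r j) ` set (tl P))"
      unfolding sP by blast
    have s2: "(\<Union>j\<in>{1..m}. (@) (pa r j) ` set (tl P)) = (@) (pa r m) ` set (tl P) \<union> (\<Union>j\<in>{1..2*h}. (@) (pa r j) ` set (tl P))"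
      unfolding e1 by simp
    have s3: "(\<Union>j\<in>{1..2*h}. {pa (r-1) j @ z |z. z \<in> set P'}) = (\<Union>j\<in>{1..2*h}. (@) (pa (r-1) j) ` set P')"
      by blast
    have s4: "set C = (\<lambda>j. pa r j @ hd P) ` {1..m}" unfolding C_def by auto
    have s5: "set T = (@) (pa r m) ` set (tl P)" unfolding T_def by simp
    show ?thesis unfolding Leq set_append BP(1) s4 s5 e2 s1 s2 s3 by blast
  qed
  have u: "[1..<m+1] = 1 # [Suc 1..<m+1]" by (rule upt_conv_Cons) (use m in simp)
  have hdL: "hd L = pa r 1 @ hd P" unfolding Leq C_def u by simp
  have lastL: "last L = pa r 1 @ last P" unfolding Leq using BP by simp
  show ?thesis using dist setL gpL hdL lastL Leq Cne by simp
qed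

end


lemma pa_eq:
  assumes "0<j" "j \<le> R" "0 < j'" "j' \<le> R'" "z = [] \<or> hd z = False" "z' = [] \<or> hd z' = False"
    and e: "pa R j @ z = pa R' j' @ z'"
  shows "R = R' \<and> j = j' \<and> z = z'"
proof -
  have k1: "key (pa R j @ z) = (R-j, j)" using key_pa[of j z R] assms by simp
  have k2: "key (pa R' j' @ z') = (R'-j', j')" using key_pa[of j' z' R'] assms by simp
  have "(R-j, j) = (R'-j', j')" using e k1 k2 by metis
  then have "R = R' \<and> j = j'" using assms by auto
  then show ?thesis using e by simp
qed

fun bser :: "nat \<Rightarrow> bool list list \<Rightarrow> nat \<Rightarrow> bool list list" where
  "bser R P' 0 = []"
| "bser R P' (Suc i) = bser R P' i @ map ((@) (pa R (2*i+1))) P' @ map ((@) (pa R (2*i+2))) (rev P')"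

lemma bser_props:
  assumes gP': "gp P'" and dP': "distinct P'" and hP': "\<forall>z\<in>set P'. z = [] \<or> hd z = False"
    and ne: "P' \<noteq> []" and R: "2*i \<le> R"
  shows "set (bser R P' i) = (\<Union>j\<in>{1..2*i}. (@) (pa R j) ` set P') \<and> gp (bser R P' i) \<and> distinct (bser R P' i)
    \<and> (0 < i \<longrightarrow> bser R P' i \<noteq> [] \<and> hd (bser R P' i) = pa R 1 @ hd P' \<and> last (bser R P' i) = pa R (2*i) @ hd P')"
  using R
proof (induction i)
  case 0
  then show ?case by simp
next
  case (Suc i)
  define S1 where "S1 = map ((@) (pa R (2*i+1))) P'"
  define S2 where "S2 = map ((@) (pa R (2*i+2))) (rev P')"
  define B where "B = bser R P' i"
  have IH: "set B = (\<Union>j\<in>{1..2*i}. (@) (pa R j) ` set P')" "gp B" "distinct B"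
    "0 < i \<Longrightarrow> B \<noteq> [] \<and> hd B = pa R 1 @ hd P' \<and> last B = pa R (2*i) @ hd P'"
    using Suc unfolding B_def by auto
  have eq: "bser R P' (Suc i) = B @ S1 @ S2" by (simp add: S1_def S2_def B_def)
  have r: "2*i+2 \<le> R" using Suc.prems by simp
  have k1: "w \<in> set S1 \<Longrightarrow> key w = (R-(2*i+1), 2*i+1)" for w
    unfolding S1_def using key_seg[where j="2*i+1" and R=R and xs=P' and w=w] hP' by simp
  have k2: "w \<in> set S2 \<Longrightarrow> key w = (R-(2*i+2), 2*i+2)" for w
    unfolding S2_def using key_seg[where j="2*i+2" and R=R and xs="rev P'" and w=w] hP' by simp
  have kB: "w \<in> set B \<Longrightarrow> snd (key w) \<le> 2*i" for w
  proof -
    assume "w \<in> set B"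
    then obtain j z where "j \<in> {1..2*i}" "z \<in> set P'" "w = pa R j @ z"
      unfolding IH(1) by blast
    then show ?thesis using key_pa[of j z R] hP' by auto
  qed
  have d: "distinct S1" "distinct S2" unfolding S1_def S2_def using dP' by (auto simp: distinct_app)
  have "set S1 \<inter> set S2 = {}" using disjK[OF k1 k2] by auto
  moreover have "set B \<inter> set S1 = {}" using disjKB[OF k1 kB] by auto
  moreover have "set B \<inter> set S2 = {}" using disjKB[OF k2 kB] by auto
  ultimately have dist: "distinct (B @ S1 @ S2)" using d IH(3) by (simp add: Int_Un_distrib Int_commute)
  have gps: "gp S1" "gp S2" unfolding S1_def S2_def using gP' by (auto intro: gp_map gp_rev)
  have ne1: "S1 \<noteq> []" "S2 \<noteq> []" unfolding S1_def S2_def using ne by auto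
  have t12: "adj (last S1) (hd S2)"
    unfolding S1_def S2_def using ne adj_step[of "2*i+1" R "last P'"] r
    by (simp add: last_map hd_map hd_rev)
  have gp12: "gp (S1 @ S2)" by (rule gp_append[OF gps]) (use t12 in simp)
  have gpall: "gp (B @ S1 @ S2)"
  proof (cases "i = 0")
    case True
    then show ?thesis using gp12 by (simp add: B_def)
  next
    case False
    show ?thesis
    proof (rule gp_append[OF IH(2) gp12])
      show "adj (last B) (hd (S1 @ S2))" using IH(4) False ne1 adj_step[of "2*i" R "hd P'"] r
        unfolding S1_def by (simp add: hd_map)
    qed
  qed
  have setall: "set (B @ S1 @ S2) = (\<Union>j\<in>{1..2*Suc i}. (@) (pa R j) ` set P')"
  proof -
    have "{1..2*Suc i} = {1..2*i} \<union> {2*i+1, 2*i+2}" by auto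
    then show ?thesis unfolding set_append IH(1) S1_def S2_def set_map set_rev
      by (simp add: UN_Un Un_ac)
  qed
  have hdl: "hd (B @ S1 @ S2) = pa R 1 @ hd P'"
  proof (cases "i = 0")
    case True
    then show ?thesis using ne unfolding S1_def B_def by (simp add: hd_map)
  next
    case False
    then show ?thesis using IH(4) by simp
  qed
  have lastl: "last (B @ S1 @ S2) = pa R (2*Suc i) @ hd P'"
    using ne unfolding S2_def by (simp add: last_map last_rev)
  show ?case unfolding eq
    by (simp only: setall gpall dist hdl lastl ne1 append_is_Nil_conv simp_thms zero_less_Suc)
qed

lemma caseII:
  assumes gP': "gp P'" and dP': "distinct P'" and hP': "\<forall>z\<in>set P'. z = [] \<or> hd z = False"
    and ne: "P' \<noteq> []" and w0: "hd P' = False # w0" and w0c: "w0 = [] \<or> hd w0 = False"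
    and m: "2*h + 1 = m" and r: "r = 2*m + 1" and h: "0 < h"
  defines "L \<equiv> bser (r-1) P' h @ map (\<lambda>j. pa r j @ w0) (rev [1..<m+1])"
  shows "distinct L \<and> set L = (\<Union>j\<in>{1..m-1}. {pa (r-1) j @ z |z. z \<in> set P'}) \<union> (\<Union>j\<in>{1..m}. {pa r j @ w0})
     \<and> gp L \<and> L \<noteq> [] \<and> hd L = pa (r-1) 1 @ hd P' \<and> last L = pa r 1 @ w0"
proof -
  define B where "B = bser (r-1) P' h"
  define C where "C = map (\<lambda>j. pa r j @ w0) [1..<m+1]"
  have Leq: "L = B @ rev C" unfolding L_def B_def C_def by (simp add: rev_map)
  have BP: "set B = (\<Union>j\<in>{1..2*h}. (@) (pa (r-1) j) ` set P')" "gp B" "distinct B" "B \<noteq> []"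
     "hd B = pa (r-1) 1 @ hd P'" "last B = pa (r-1) (2*h) @ hd P'"
    using bser_props[OF gP' dP' hP' ne, of h "r-1"] m r h unfolding B_def by auto
  have Cp: "gp C" "distinct C" unfolding C_def using col[of "m+1" r 1 w0] w0c r by auto
  have BC: "set B \<inter> set C = {}"
  proof (rule ccontr)
    assume "set B \<inter> set C \<noteq> {}"
    then obtain w where w: "w \<in> set B" "w \<in> set C" by blast
    from w(2) obtain j where j: "j \<in> set [1..<m+1]" "w = pa r j @ w0" unfolding C_def set_map by blast
    from w(1) obtain i z where i: "i \<in> {1..2*h}" "z \<in> set P'" "w = pa (r-1) i @ z" unfolding BP(1) by blast
    show False using pa_eq[of j r i "r-1" w0 z] j i hP' w0c m r by auto
  qed
  have Cne: "C \<noteq> []" unfolding C_def using m by simp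
  have lastB: "last B = pa (r-1) (m-1) @ False # w0" using BP(6) w0 m by (simp add: m[symmetric])
  have lastC: "last C = pa r m @ w0" unfolding C_def using m by (simp add: last_map)
  have u: "[1..<m+1] = 1 # [Suc 1..<m+1]" by (rule upt_conv_Cons) (use m in simp)
  have hdC: "hd C = pa r 1 @ w0" unfolding C_def u by simp
  have gpL: "gp L" unfolding Leq
  proof (rule gp_append[OF BP(2) gp_rev[OF Cp(1)]])
    show "adj (last B) (hd (rev C))" unfolding lastB hd_rev lastC
      using adj_sym[OF adj_rung[of "m-1" r w0]] m r by simp
  qed
  have setL: "set L = (\<Union>j\<in>{1..m-1}. {pa (r-1) j @ z |z. z \<in> set P'}) \<union> (\<Union>j\<in>{1..m}. {pa r j @ w0})"
  proof -
    have e2: "m - 1 = 2*h" using m by simp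
    have s4: "set C = (\<lambda>j. pa r j @ w0) ` {1..m}" unfolding C_def by auto
    show ?thesis unfolding Leq set_append set_rev BP(1) s4 e2 by blast
  qed
  show ?thesis using BP Cp BC gpL setL Cne unfolding Leq
    by (simp add: hd_append2 last_rev hdC)
qed



lemma pa_eq_iff:
  "0<j \<Longrightarrow> j \<le> R \<Longrightarrow> 0 < j' \<Longrightarrow> j' \<le> R' \<Longrightarrow> z = [] \<or> hd z = False \<Longrightarrow> z' = [] \<or> hd z' = False \<Longrightarrow>
    (pa R j @ z = pa R' j' @ z') \<longleftrightarrow> (R = R' \<and> j = j' \<and> z = z')"
  using pa_eq by blast

lemma pa_eq_iff0:
  "0<j \<Longrightarrow> j \<le> R \<Longrightarrow> 0 < j' \<Longrightarrow> j' \<le> R' \<Longrightarrow> z' = [] \<or> hd z' = False \<Longrightarrow>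
    (pa R j = pa R' j' @ z') \<longleftrightarrow> (R = R' \<and> j = j' \<and> z' = [])"
  using pa_eq[of j R j' R' "[]" z'] by auto

lemma pa_eq_iff0':
  "0<j \<Longrightarrow> j \<le> R \<Longrightarrow> 0 < j' \<Longrightarrow> j' \<le> R' \<Longrightarrow> z' = [] \<or> hd z' = False \<Longrightarrow>
    (pa R' j' @ z' = pa R j) \<longleftrightarrow> (R = R' \<and> j = j' \<and> z' = [])"
  using pa_eq[of j R j' R' "[]" z'] by auto

lemma pa_eq_iff00:
  "0<j \<Longrightarrow> j \<le> R \<Longrightarrow> 0 < j' \<Longrightarrow> j' \<le> R' \<Longrightarrow>
    (pa R j = pa R' j') \<longleftrightarrow> (R = R' \<and> j = j')"
  using pa_eq[of j R j' R' "[]" "[]"] by auto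

lemma caseIV:
  assumes m: "2 \<le> m" and n: "n = 2*m + 1"
  defines "L \<equiv> map (\<lambda>j. pa (n-1) j @ [False]) [1..<m] @ map (pa n) (rev [1..<m+1])"
  shows "distinct L \<and> set L = pa n ` {1..m} \<union> (\<lambda>j. pa (n-1) j @ [False]) ` {1..m-1}
     \<and> gp L \<and> L \<noteq> [] \<and> hd L = pa (n-1) 1 @ [False] \<and> last L = pa n 1"
proof -
  define Y where "Y = map (\<lambda>j. pa (n-1) j @ [False]) [1..<m]"
  define X where "X = map (\<lambda>j. pa n j @ []) [1..<m+1]"
  have Leq: "L = Y @ rev X" unfolding L_def X_def Y_def by (simp add: rev_map)
  have Yp: "gp Y" "distinct Y" unfolding Y_def using col[of m "n-1" 1 "[False]"] n by auto
  have Xp: "gp X" "distinct X" unfolding X_def using col[of "m+1" n 1 "[]"] n by auto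
  have XY: "set X \<inter> set Y = {}"
    unfolding X_def Y_def using n by (auto simp: pa_eq_iff0)
  have Yne: "Y \<noteq> []" unfolding Y_def using m by simp
  have u: "[1..<m] = 1 # [Suc 1..<m]" by (rule upt_conv_Cons) (use m in simp)
  have u2: "[1..<m+1] = 1 # [Suc 1..<m+1]" by (rule upt_conv_Cons) (use m in simp)
  have hdY: "hd Y = pa (n-1) 1 @ [False]" unfolding Y_def u by simp
  have lastY: "last Y = pa (n-1) (m-1) @ [False]" unfolding Y_def using m by (simp add: last_map)
  have lastX: "last X = pa n m" unfolding X_def using m by (simp add: last_map)
  have hdX: "hd X = pa n 1" unfolding X_def u2 by simp
  have gpL: "gp L" unfolding Leq
  proof (rule gp_append[OF Yp(1) gp_rev[OF Xp(1)]])
    show "adj (last Y) (hd (rev X))" unfolding lastY hd_rev lastX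
      using adj_sym[OF adj_rung[of "m-1" n "[]"]] m n by simp
  qed
  have sX: "set X = pa n ` {1..m}" unfolding X_def by auto
  have sY: "set Y = (\<lambda>j. pa (n-1) j @ [False]) ` {1..m-1}" unfolding Y_def by auto
  have Xne: "X \<noteq> []" unfolding X_def using m by simp
  show ?thesis using Xp Yp XY gpL Yne hdY Xne unfolding Leq
    by (simp add: hd_append2 last_rev hdX sX sY Un_commute Int_commute last_append)
qed

fun blk3 :: "nat \<Rightarrow> nat \<Rightarrow> bool list list" where
  "blk3 n 0 = []"
| "blk3 n (Suc i) = [pa (n-1) (2*i+2) @ [False], pa n (2*i+3), pa n (2*i+2), pa (n-1) (2*i+1) @ [False]] @ blk3 n i"

lemma blk3_props:
  assumes "2*i + 2 < n"
  shows "set (blk3 n i) = pa n ` {2..2*i+1} \<union> (\<lambda>j. pa (n-1) j @ [False]) ` {1..2*i}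
    \<and> gp (blk3 n i) \<and> distinct (blk3 n i)
    \<and> (0 < i \<longrightarrow> blk3 n i \<noteq> [] \<and> hd (blk3 n i) = pa (n-1) (2*i) @ [False] \<and> last (blk3 n i) = pa (n-1) 1 @ [False])"
  using assms
proof (induction i)
  case 0
  then show ?case by simp
next
  case (Suc i)
  define B where "B = blk3 n i"
  have IH: "set B = pa n ` {2..2*i+1} \<union> (\<lambda>j. pa (n-1) j @ [False]) ` {1..2*i}" "gp B" "distinct B"
    "0 < i \<Longrightarrow> B \<noteq> [] \<and> hd B = pa (n-1) (2*i) @ [False] \<and> last B = pa (n-1) 1 @ [False]"
    using Suc unfolding B_def by auto
  have r: "2*i+4 < n" using Suc.prems by simp
  have eq: "blk3 n (Suc i) = [pa (n-1) (2*i+2) @ [False], pa n (2*i+3), pa n (2*i+2), pa (n-1) (2*i+1) @ [False]] @ B"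
    by (simp add: B_def)
  have dist: "distinct (blk3 n (Suc i))" unfolding eq using IH(3) r
    by (auto simp: IH(1) pa_eq_iff pa_eq_iff0 pa_eq_iff0' pa_eq_iff00)
  have e3: "2*i+3 = Suc (2*i+2)" by simp
  have a1: "adj (pa (n-1) (2*i+2) @ [False]) (pa n (2*i+3))"
    unfolding e3 using adj_sym[OF adj_rung[of "2*i+2" n "[]"]] r by simp
  have a2: "adj (pa n (2*i+3)) (pa n (2*i+2))"
    unfolding e3 using adj_sym[OF adj_step[of "2*i+2" n "[]"]] r by simp
  have a3: "adj (pa n (2*i+2)) (pa (n-1) (2*i+1) @ [False])"
    using adj_rung[of "2*i+1" n "[]"] r by simp
  have a4: "0 < i \<Longrightarrow> adj (pa (n-1) (2*i+1) @ [False]) (pa (n-1) (2*i) @ [False])"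
    using adj_sym[OF adj_step[of "2*i" "n-1" "[False]"]] r by simp
  have gp4: "gp [pa (n-1) (2*i+2) @ [False], pa n (2*i+3), pa n (2*i+2), pa (n-1) (2*i+1) @ [False]]"
    using a1 a2 a3 by simp
  have gpall: "gp (blk3 n (Suc i))" unfolding eq
  proof (rule gp_append[OF gp4 IH(2)])
    assume "B \<noteq> []"
    then have "0 < i" by (cases i) (auto simp: B_def)
    then show "adj (last [pa (n-1) (2*i+2) @ [False], pa n (2*i+3), pa n (2*i+2), pa (n-1) (2*i+1) @ [False]]) (hd B)"
      using a4 IH(4) by simp
  qed
  have setall: "set (blk3 n (Suc i)) = pa n ` {2..2*Suc i+1} \<union> (\<lambda>j. pa (n-1) j @ [False]) ` {1..2*Suc i}"
  proof -
    have e1: "{2..2*Suc i+1} = insert (2*i+3) (insert (2*i+2) {2..2*i+1})" by auto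
    have e2: "{1..2*Suc i} = insert (2*i+2) (insert (2*i+1) {1..2*i})" by auto
    show ?thesis unfolding eq set_append IH(1) e1 e2 by auto
  qed
  have lastl: "last (blk3 n (Suc i)) = pa (n-1) 1 @ [False]"
  proof (cases "i = 0")
    case True
    then show ?thesis unfolding eq B_def by simp
  next
    case False
    then show ?thesis unfolding eq using IH(4) by simp
  qed
  have hdl: "hd (blk3 n (Suc i)) = pa (n-1) (2*Suc i) @ [False]" unfolding eq by simp
  have nel: "blk3 n (Suc i) \<noteq> []" unfolding eq by simp
  show ?case by (simp only: dist gpall setall lastl hdl nel simp_thms zero_less_Suc)
qed

lemma caseIII:
  assumes p: "2*h + 1 = p" and n: "n = 2*p + 2" and h: "0 < h"
  defines "L \<equiv> map (\<lambda>j. pa (n-2) j @ [False, False]) [1..<p] @ [pa (n-1) p @ [False]] @ blk3 n h"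
  shows "distinct L \<and> set L = pa n ` {2..p} \<union> (\<lambda>j. pa (n-1) j @ [False]) ` {1..p} \<union> (\<lambda>j. pa (n-2) j @ [False, False]) ` {1..p-1}
     \<and> gp L \<and> L \<noteq> [] \<and> hd L = pa (n-2) 1 @ [False, False] \<and> last L = pa (n-1) 1 @ [False]"
proof -
  define W where "W = map (\<lambda>j. pa (n-2) j @ [False, False]) [1..<p]"
  define B where "B = blk3 n h"
  have Leq: "L = W @ [pa (n-1) p @ [False]] @ B" unfolding L_def W_def B_def by simp
  have BP: "set B = pa n ` {2..2*h+1} \<union> (\<lambda>j. pa (n-1) j @ [False]) ` {1..2*h}" "gp B" "distinct B"
    "B \<noteq> []" "hd B = pa (n-1) (2*h) @ [False]" "last B = pa (n-1) 1 @ [False]"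
    using blk3_props[of h n] p n h unfolding B_def by auto
  have Wp: "gp W" "distinct W" unfolding W_def using col[of p "n-2" 1 "[False, False]"] n by auto
  have sW: "set W = (\<lambda>j. pa (n-2) j @ [False, False]) ` {1..p-1}" unfolding W_def by auto
  have Wne: "W \<noteq> []" unfolding W_def using p h by simp
  have u: "[1..<p] = 1 # [Suc 1..<p]" by (rule upt_conv_Cons) (use p h in simp)
  have hdW: "hd W = pa (n-2) 1 @ [False, False]" unfolding W_def u by simp
  have lastW: "last W = pa (n-2) (p-1) @ [False, False]" unfolding W_def using p h by (simp add: last_map)
  have dist: "distinct L" unfolding Leq using Wp BP n p
    by (auto simp: sW pa_eq_iff pa_eq_iff0 pa_eq_iff0' pa_eq_iff00)
  have a1: "adj (last W) (pa (n-1) p @ [False])" unfolding lastW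
    using adj_sym[OF adj_rung[of "p-1" "n-1" "[False]"]] p n h by (simp add: numeral_2_eq_2)
  have a2: "adj (pa (n-1) p @ [False]) (hd B)" unfolding BP(5)
    using adj_sym[OF adj_step[of "2*h" "n-1" "[False]"]] p n by simp
  have gpL: "gp L" unfolding Leq
    by (rule gp_append[OF Wp(1)]) (use a1 a2 BP in \<open>auto simp: gp_Cons\<close>)
  have setL: "set L = pa n ` {2..p} \<union> (\<lambda>j. pa (n-1) j @ [False]) ` {1..p} \<union> (\<lambda>j. pa (n-2) j @ [False, False]) ` {1..p-1}"
  proof -
    have e1: "{1..p} = insert p {1..2*h}" using p by auto
    show ?thesis unfolding Leq set_append BP(1) sW e1 using p by auto
  qed
  show ?thesis using dist setL gpL Wne hdW BP unfolding Leq by (simp add: hd_append2)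
qed



abbreviation cc :: "nat \<Rightarrow> bool list" where "cc n \<equiv> concat (replicate n [False,False,True])"

lemma fill_G1: "length c \<le> n \<Longrightarrow> fill (c @ u) n = c @ fill u (n - length c)"
  unfolding fill_def using take_cc[of "n - length c - length u" n "n - length c"] by simp

lemma fill_G2: "3 \<le> n \<Longrightarrow> fill [] n = [False,False,True] @ fill [] (n-3)"
proof -
  assume n: "3 \<le> n"
  obtain j where j: "n = Suc (Suc (Suc j))" using n by (metis add.commute add_Suc_right le_Suc_ex numeral_3_eq_3 plus_nat.add_0)
  have "fill [] n = [False,False,True] @ take j (cc (Suc (Suc j)))" unfolding j by (simp add: fill_def)
  also have "take j (cc (Suc (Suc j))) = take j (cc j)" using take_cc[of j "Suc (Suc j)" j] by simp
  finally show ?thesis unfolding j by (simp add: fill_def)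
qed

lemma fill_G3: "fill [False] (Suc k) = False # fill [] k"
  unfolding fill_def using take_cc[of k "Suc k" k] by simp

lemma cc_nth1: "cc (Suc m) ! 1 = False" by simp
lemma cc_nth2: "cc (Suc m) ! 2 = True" by (simp add: numeral_2_eq_2)

lemma fill_nth: "i < n \<Longrightarrow> fill [] n ! i = cc n ! i" by (simp add: fill_def)

lemma fill_ne: "3 \<le> k \<Longrightarrow> fill [False] k \<noteq> fill [] k"
proof
  assume k: "3 \<le> k" and e: "fill [False] k = fill [] k"
  obtain k' where k': "k = Suc k'" using k by (cases k) auto
  obtain k'' where k'': "k' = Suc k''" using k k' by (cases k') auto
  have "fill [False] k ! 2 = fill [] k' ! 1" unfolding k' fill_G3 by (simp add: numeral_2_eq_2)
  also have "\<dots> = False" using k k' k'' fill_nth[of 1 k'] cc_nth1[of k''] by simp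
  finally have a: "fill [False] k ! 2 = False" .
  have "fill [] k ! 2 = True" using k k' fill_nth[of 2 k] cc_nth2[of k'] by simp
  then show False using a e by simp
qed

lemma fill_small: "fill [False] 1 = [False]" "fill [] 1 = [False]" "fill [False] 2 = [False,False]"
  "fill [] 2 = [False,False]" "fill [False] 3 = [False,False,False]" "fill [] 3 = [False,False,True]"
  by (simp_all add: fill_def numeral_eq_Suc)

lemma single: "distinct xs \<Longrightarrow> xs \<noteq> [] \<Longrightarrow> hd xs = last xs \<Longrightarrow> xs = [hd xs]"
  by (cases xs) (auto simp: last_ConsR split: if_splits)

lemma len2: "xs \<noteq> [] \<Longrightarrow> hd xs \<noteq> last xs \<Longrightarrow> 2 \<le> length xs"
  by (cases xs) (auto split: if_splits simp: last_ConsR Suc_le_eq)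

lemma Dset_pa: "Dset R n = (\<Union>j\<in>{1..(R-1) div 2}. {pa R j @ z |z. z \<in> Zset (n-R)})"
  unfolding Dset_def pa_def by simp

lemma Zset0: "Zset 0 = {[]}" by (simp add: Zset_def)

lemma Zfacts:
  assumes hZ: "\<forall>k<n. gray1 (Z k) (Zset k) \<and> Z k \<noteq> []" and k: "k < n"
  shows "gp (Z k)" "distinct (Z k)" "set (Z k) = Zset k" "Z k \<noteq> []" "\<forall>z\<in>set (Z k). z = [] \<or> hd z = False"
  using hZ k Zset_hd by (auto simp: gray1_iff)

lemma Zsingle:
  assumes hZ: "\<forall>k<n. gray1 (Z k) (Zset k) \<and> Z k \<noteq> []"
    and hZfl: "\<forall>k. 0 < k \<and> k < n \<longrightarrow> hd (Z k) = fill [False] k \<and> last (Z k) = fill [] k"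
    and k: "0 < k" "k < n" and e: "fill [False] k = fill [] k"
  shows "Zset k = {fill [] k}"
proof -
  have "Z k = [hd (Z k)]" using single[of "Z k"] Zfacts[OF hZ k(2)] hZfl k e by auto
  then have "set (Z k) = {fill [] k}" using hZfl k e by (metis empty_set list.simps(15))
  then show ?thesis using Zfacts[OF hZ k(2)] by simp
qed

lemma thm_i:
  assumes hZ: "\<forall>k<n. gray1 (Z k) (Zset k) \<and> Z k \<noteq> []"
    and hZfl: "\<forall>k. 0 < k \<and> k < n \<longrightarrow> hd (Z k) = fill [False] k \<and> last (Z k) = fill [] k"
    and n: "n > 3"
  shows "\<exists>L. gray1 L (Dset 3 n) \<and> L \<noteq> [] \<and> hd L = fill [False, False, True, False] n \<and> last L = fill [] n"
proof -
  define P where "P = Z (n-3)"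
  have k: "n - 3 < n" "0 < n - 3" using n by auto
  note F = Zfacts[OF hZ k(1), folded P_def]
  have fl: "hd P = fill [False] (n-3)" "last P = fill [] (n-3)" using hZfl k unfolding P_def by auto
  define L where "L = map ((@) [False,False,True]) P"
  have D: "Dset 3 n = (@) [False,False,True] ` Zset (n-3)"
    unfolding Dset_pa by (auto simp: pa_def numeral_3_eq_3)
  have "gray1 L (Dset 3 n)" unfolding gray1_iff L_def D using F
    by (auto simp: distinct_app intro: gp_map)
  moreover have "L \<noteq> []" unfolding L_def using F by simp
  moreover have "hd L = fill [False, False, True, False] n"
    using fill_G1[of "[False,False,True]" n "[False]"] n F fl unfolding L_def by (simp add: hd_map numeral_3_eq_3)
  moreover have "last L = fill [] n"
    using fill_G2[of n] n F fl unfolding L_def by (simp add: last_map)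
  ultimately show ?thesis by blast
qed

lemma thm_v:
  assumes hZ: "\<forall>k<n. gray1 (Z k) (Zset k) \<and> Z k \<noteq> []"
    and hZfl: "\<forall>k. 0 < k \<and> k < n \<longrightarrow> hd (Z k) = fill [False] k \<and> last (Z k) = fill [] k"
    and r: "r mod 4 = 3" "7 \<le> r" "r + 3 \<le> n"
  shows "\<exists>L. gray1 L (Dset r n \<union> Dset (r - 1) n) \<and> L \<noteq> [] \<and>
        hd L = fill (replicate (r - 1) False @ [True, False]) n \<and>
        last L = fill (replicate (r - 1) False @ [True]) n"
proof -
  define k where "k = n - r"
  obtain q where q: "r = 4*q + 3" using r(1) by (metis mod_div_mult_eq add.commute mult.commute)
  have q1: "1 \<le> q" using q r by simp
  have q0: "0 < q" using q1 by simp
  define h where "h = q"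
  define m where "m = 2*h + 1"
  have mr: "r = 2*m + 1" unfolding m_def h_def q by simp
  define P where "P = Z k"
  define P' where "P' = Z (Suc k)"
  have k1: "k < n" "0 < k" "Suc k < n" "3 \<le> k" using r unfolding k_def by auto
  note F = Zfacts[OF hZ k1(1), folded P_def]
  note F' = Zfacts[OF hZ k1(3), folded P'_def]
  have fl: "hd P = fill [False] k" "last P = fill [] k" using hZfl k1 unfolding P_def by auto
  have fl': "hd P' = False # last P" using hZfl k1 fl unfolding P'_def by (simp add: fill_G3)
  have lenP: "2 \<le> length P" using len2[of P] F fl fill_ne[OF k1(4)] by simp
  interpret setting r P P'
    using F F' lenP fl' by unfold_locales auto
  define L where "L = map (\<lambda>j. pa r j @ hd P) [1..<m+1] @ map ((@) (pa r m)) (tl P) @ blk r P P' h"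
  have C: "distinct L \<and> set L = (\<Union>j\<in>{1..m}. {pa r j @ z |z. z \<in> set P}) \<union> (\<Union>j\<in>{1..m-1}. {pa (r-1) j @ z |z. z \<in> set P'})
     \<and> gp L \<and> L \<noteq> [] \<and> hd L = pa r 1 @ hd P \<and> last L = pa r 1 @ last P"
    unfolding L_def by (rule caseV) (simp_all add: m_def mr h_def q0)
  have D1: "Dset r n = (\<Union>j\<in>{1..m}. {pa r j @ z |z. z \<in> set P})"
    unfolding Dset_pa F(3) k_def using mr by simp
  have D2: "Dset (r-1) n = (\<Union>j\<in>{1..m-1}. {pa (r-1) j @ z |z. z \<in> set P'})"
  proof -
    have "(r - 1 - 1) div 2 = m - 1" "n - (r-1) = Suc k" using mr r unfolding k_def by auto
    then show ?thesis unfolding Dset_pa F'(3) by simp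
  qed
  have pa1: "pa r 1 = replicate (r-1) False @ [True]" by (simp add: pa_def)
  have h1: "fill (replicate (r - 1) False @ [True, False]) n = pa r 1 @ fill [False] k"
    using fill_G1[of "pa r 1" n "[False]"] r unfolding pa1 k_def by simp
  have h2: "fill (replicate (r - 1) False @ [True]) n = pa r 1 @ fill [] k"
    using fill_G1[of "pa r 1" n "[]"] r unfolding pa1 k_def by simp
  have c: "distinct L" "set L = Dset r n \<union> Dset (r - 1) n" "gp L" "L \<noteq> []"
    "hd L = fill (replicate (r - 1) False @ [True, False]) n" "last L = fill (replicate (r - 1) False @ [True]) n"
    unfolding D1 D2 h1 h2 fl[symmetric] using C by simp_all
  show ?thesis using c unfolding gray1_iff by blast
qed

lemma Zset12:
  assumes hZ: "\<forall>k<n. gray1 (Z k) (Zset k) \<and> Z k \<noteq> []"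
    and hZfl: "\<forall>k. 0 < k \<and> k < n \<longrightarrow> hd (Z k) = fill [False] k \<and> last (Z k) = fill [] k"
    and n: "3 < n"
  shows "Zset 1 = {[False]}" "Zset 2 = {[False,False]}"
proof -
  have "Zset 1 = {fill [] 1}" by (rule Zsingle[OF hZ hZfl]) (use n in \<open>simp_all add: fill_def\<close>)
  then show "Zset 1 = {[False]}" by (simp add: fill_def)
  have "Zset 2 = {fill [] 2}" by (rule Zsingle[OF hZ hZfl]) (use n in \<open>simp_all add: fill_def numeral_eq_Suc\<close>)
  then show "Zset 2 = {[False,False]}" by (simp add: fill_def numeral_eq_Suc)
qed

lemma thm_ii:
  assumes hZ: "\<forall>k<n. gray1 (Z k) (Zset k) \<and> Z k \<noteq> []"
    and hZfl: "\<forall>k. 0 < k \<and> k < n \<longrightarrow> hd (Z k) = fill [False] k \<and> last (Z k) = fill [] k"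
    and r: "r mod 4 = 3" "7 \<le> r" "r = n - 2" "r \<le> n"
  shows "\<exists>L. gray1 L (Dset (n - 2) n \<union> Dset (n - 3) n) \<and> L \<noteq> [] \<and>
        hd L = replicate (n - 4) False @ [True, False, False, False] \<and>
        last L = replicate (n - 3) False @ [True, False, False]"
proof -
  obtain q where q: "r = 4*q + 3" using r(1) by (metis mod_div_mult_eq add.commute mult.commute)
  have q0: "0 < q" using q r by simp
  define h where "h = q"
  define m where "m = 2*h + 1"
  have mr: "r = 2*m + 1" unfolding m_def h_def q by simp
  have n: "n = r + 2" using r by simp
  define P' where "P' = Z 3"
  have k1: "3 < n" using n r by simp
  note F' = Zfacts[OF hZ k1, folded P'_def]
  have fl': "hd P' = False # [False, False]" using hZfl k1 unfolding P'_def by (simp add: fill_small)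
  define L where "L = bser (r-1) P' h @ map (\<lambda>j. pa r j @ [False, False]) (rev [1..<m+1])"
  have C: "distinct L \<and> set L = (\<Union>j\<in>{1..m-1}. {pa (r-1) j @ z |z. z \<in> set P'}) \<union> (\<Union>j\<in>{1..m}. {pa r j @ [False, False]})
     \<and> gp L \<and> L \<noteq> [] \<and> hd L = pa (r-1) 1 @ hd P' \<and> last L = pa r 1 @ [False, False]"
    unfolding L_def by (rule caseII) (use F' fl' in \<open>simp_all add: m_def mr h_def q0\<close>)
  have Z2: "Zset 2 = {[False,False]}" using Zset12[OF hZ hZfl k1] by simp
  have D1: "Dset (n-2) n = (\<Union>j\<in>{1..m}. {pa r j @ [False, False]})"
  proof -
    have e: "(r - 1) div 2 = m" "n - r = 2" using mr n by auto
    have "Dset r n = (\<Union>j\<in>{1..m}. {pa r j @ [False, False]})" unfolding Dset_pa e Z2 by auto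
    then show ?thesis using r by simp
  qed
  have D2: "Dset (n-3) n = (\<Union>j\<in>{1..m-1}. {pa (r-1) j @ z |z. z \<in> set P'})"
  proof -
    have e: "(r - 1 - 1) div 2 = m - 1" "n - (r - 1) = 3" using mr n by auto
    have "Dset (r-1) n = (\<Union>j\<in>{1..m-1}. {pa (r-1) j @ z |z. z \<in> set P'})" unfolding Dset_pa e F'(3) ..
    moreover have "n - 3 = r - 1" using n by simp
    ultimately show ?thesis by simp
  qed
  have h1: "pa (r-1) 1 @ hd P' = replicate (n - 4) False @ [True, False, False, False]"
  proof -
    have e: "r - 1 - 1 = n - 4" using n by simp
    show ?thesis unfolding fl' pa_def e by simp
  qed
  have h2: "pa r 1 @ [False, False] = replicate (n - 3) False @ [True, False, False]"
  proof -
    have e: "r - 1 = n - 3" using n by simp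
    show ?thesis unfolding pa_def e by simp
  qed
  have c: "distinct L" "set L = Dset (n - 2) n \<union> Dset (n - 3) n" "gp L" "L \<noteq> []"
    "hd L = replicate (n - 4) False @ [True, False, False, False]" "last L = replicate (n - 3) False @ [True, False, False]"
    unfolding D1 D2 h1[symmetric] h2[symmetric] using C by (simp_all add: Un_commute)
  show ?thesis using c unfolding gray1_iff by blast
qed

lemma thm_iv:
  assumes hZ: "\<forall>k<n. gray1 (Z k) (Zset k) \<and> Z k \<noteq> []"
    and hZfl: "\<forall>k. 0 < k \<and> k < n \<longrightarrow> hd (Z k) = fill [False] k \<and> last (Z k) = fill [] k"
    and r: "n mod 4 = 3" "7 \<le> n"
  shows "\<exists>L. gray1 L (Dset n n \<union> Dset (n - 1) n) \<and> L \<noteq> [] \<and>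
        hd L = replicate (n - 2) False @ [True, False] \<and>
        last L = replicate (n - 1) False @ [True]"
proof -
  obtain q where q: "n = 4*q + 3" using r(1) by (metis mod_div_mult_eq add.commute mult.commute)
  have q0: "0 < q" using q r by simp
  define m where "m = 2*q + 1"
  have mr: "n = 2*m + 1" unfolding m_def q by simp
  define L where "L = map (\<lambda>j. pa (n-1) j @ [False]) [1..<m] @ map (pa n) (rev [1..<m+1])"
  have C: "distinct L \<and> set L = pa n ` {1..m} \<union> (\<lambda>j. pa (n-1) j @ [False]) ` {1..m-1}
     \<and> gp L \<and> L \<noteq> [] \<and> hd L = pa (n-1) 1 @ [False] \<and> last L = pa n 1"
    unfolding L_def by (rule caseIV) (use q0 in \<open>simp_all add: m_def mr\<close>)
  have k1: "3 < n" using r by simp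
  have Z1: "Zset 1 = {[False]}" using Zset12[OF hZ hZfl k1] by simp
  have D1: "Dset n n = pa n ` {1..m}"
  proof -
    have e: "(n - 1) div 2 = m" "n - n = 0" using mr by auto
    show ?thesis unfolding Dset_pa e Zset0 by auto
  qed
  have D2: "Dset (n-1) n = (\<lambda>j. pa (n-1) j @ [False]) ` {1..m-1}"
  proof -
    have e: "(n - 1 - 1) div 2 = m - 1" "n - (n-1) = 1" using mr by auto
    show ?thesis unfolding Dset_pa e Z1 by auto
  qed
  have h1: "pa (n-1) 1 @ [False] = replicate (n - 2) False @ [True, False]"
  proof -
    have e: "n - 1 - 1 = n - 2" by simp
    show ?thesis unfolding pa_def e by simp
  qed
  have h2: "pa n 1 = replicate (n - 1) False @ [True]"
    unfolding pa_def by simp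
  have c: "distinct L" "set L = Dset n n \<union> Dset (n - 1) n" "gp L" "L \<noteq> []"
    "hd L = replicate (n - 2) False @ [True, False]" "last L = replicate (n - 1) False @ [True]"
    unfolding D1 D2 h1[symmetric] h2[symmetric] using C by simp_all
  show ?thesis using c unfolding gray1_iff by blast
qed

lemma thm_iii:
  assumes hZ: "\<forall>k<n. gray1 (Z k) (Zset k) \<and> Z k \<noteq> []"
    and hZfl: "\<forall>k. 0 < k \<and> k < n \<longrightarrow> hd (Z k) = fill [False] k \<and> last (Z k) = fill [] k"
    and r: "n mod 4 = 0" "8 \<le> n"
  shows "\<exists>L.
        gray1 L ((Dset n n \<union> Dset (n - 1) n \<union> Dset (n - 2) n) - {replicate (n - 1) False @ [True]})
        \<and> L \<noteq> [] \<and>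
        hd L = replicate (n - 3) False @ [True, False, False] \<and>
        last L = replicate (n - 2) False @ [True, False]"
proof -
  have n4: "n = 4 * (n div 4)" using div_mult_mod_eq[of n 4] r(1) by simp
  define q where "q = n div 4 - 1"
  have q: "n = 4*q + 4" using n4 r(2) unfolding q_def by linarith
  have q0: "0 < q" using q r by simp
  define p where "p = 2*q + 1"
  have pn: "n = 2*p + 2" unfolding p_def q by simp
  define L where "L = map (\<lambda>j. pa (n-2) j @ [False, False]) [1..<p] @ [pa (n-1) p @ [False]] @ blk3 n q"
  have C: "distinct L \<and> set L = pa n ` {2..p} \<union> (\<lambda>j. pa (n-1) j @ [False]) ` {1..p} \<union> (\<lambda>j. pa (n-2) j @ [False, False]) ` {1..p-1}
     \<and> gp L \<and> L \<noteq> [] \<and> hd L = pa (n-2) 1 @ [False, False] \<and> last L = pa (n-1) 1 @ [False]"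
    unfolding L_def by (rule caseIII) (use q0 in \<open>simp_all add: p_def pn\<close>)
  have k1: "3 < n" using r by simp
  have Z1: "Zset 1 = {[False]}" and Z2: "Zset 2 = {[False,False]}" using Zset12[OF hZ hZfl k1] by simp_all
  have D1: "Dset n n = pa n ` {1..p}"
  proof -
    have e: "(n - 1) div 2 = p" "n - n = 0" using pn by auto
    show ?thesis unfolding Dset_pa e Zset0 by auto
  qed
  have D2: "Dset (n-1) n = (\<lambda>j. pa (n-1) j @ [False]) ` {1..p}"
  proof -
    have e: "(n - 1 - 1) div 2 = p" "n - (n-1) = 1" using pn by auto
    show ?thesis unfolding Dset_pa e Z1 by auto
  qed
  have D3: "Dset (n-2) n = (\<lambda>j. pa (n-2) j @ [False, False]) ` {1..p-1}"
  proof -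
    have e: "(n - 2 - 1) div 2 = p - 1" "n - (n-2) = 2" using pn by auto
    show ?thesis unfolding Dset_pa e Z2 by auto
  qed
  have x1: "replicate (n - 1) False @ [True] = pa n 1" unfolding pa_def by simp
  have S: "(pa n ` {1..p} \<union> (\<lambda>j. pa (n-1) j @ [False]) ` {1..p} \<union> (\<lambda>j. pa (n-2) j @ [False, False]) ` {1..p-1}) - {pa n 1}
     = pa n ` {2..p} \<union> (\<lambda>j. pa (n-1) j @ [False]) ` {1..p} \<union> (\<lambda>j. pa (n-2) j @ [False, False]) ` {1..p-1}"
  proof -
    have b: "pa n 1 \<notin> (\<lambda>j. pa (n-1) j @ [False]) ` {1..p}"
    proof
      assume "pa n 1 \<in> (\<lambda>j. pa (n-1) j @ [False]) ` {1..p}"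
      then obtain j where j: "j \<in> {1..p}" "pa n 1 @ [] = pa (n-1) j @ [False]" by auto
      have "n = n - 1 \<and> 1 = j \<and> [] = [False]" by (rule pa_eq[OF _ _ _ _ _ _ j(2)]) (use j pn in auto)
      then show False by simp
    qed
    have c: "pa n 1 \<notin> (\<lambda>j. pa (n-2) j @ [False, False]) ` {1..p-1}"
    proof
      assume "pa n 1 \<in> (\<lambda>j. pa (n-2) j @ [False, False]) ` {1..p-1}"
      then obtain j where j: "j \<in> {1..p-1}" "pa n 1 @ [] = pa (n-2) j @ [False, False]" by auto
      have "n = n - 2 \<and> 1 = j \<and> [] = [False, False]" by (rule pa_eq[OF _ _ _ _ _ _ j(2)]) (use j pn in auto)
      then show False by simp
    qed
    have a: "pa n ` {1..p} - {pa n 1} = pa n ` {2..p}"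
    proof
      show "pa n ` {1..p} - {pa n 1} \<subseteq> pa n ` {2..p}"
      proof
        fix w assume "w \<in> pa n ` {1..p} - {pa n 1}"
        then obtain j where j: "j \<in> {1..p}" "w = pa n j" "pa n j \<noteq> pa n 1" by auto
        then have "j \<noteq> 1" by auto
        then show "w \<in> pa n ` {2..p}" using j by auto
      qed
      show "pa n ` {2..p} \<subseteq> pa n ` {1..p} - {pa n 1}"
      proof
        fix w assume "w \<in> pa n ` {2..p}"
        then obtain j where j: "j \<in> {2..p}" "w = pa n j" by auto
        have "pa n j @ [] \<noteq> pa n 1 @ []"
        proof
          assume e: "pa n j @ [] = pa n 1 @ []"
          show False using pa_eq[OF _ _ _ _ _ _ e] j pn by auto
        qed
        then show "w \<in> pa n ` {1..p} - {pa n 1}" using j by auto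
      qed
    qed
    show ?thesis using a b c by blast
  qed
  have h1: "pa (n-2) 1 @ [False, False] = replicate (n - 3) False @ [True, False, False]"
  proof -
    have e: "n - 2 - 1 = n - 3" by simp
    show ?thesis unfolding pa_def e by simp
  qed
  have h2: "pa (n-1) 1 @ [False] = replicate (n - 2) False @ [True, False]"
  proof -
    have e: "n - 1 - 1 = n - 2" by simp
    show ?thesis unfolding pa_def e by simp
  qed
  have c: "distinct L" "set L = (Dset n n \<union> Dset (n - 1) n \<union> Dset (n - 2) n) - {replicate (n - 1) False @ [True]}" "gp L" "L \<noteq> []"
    "hd L = replicate (n - 3) False @ [True, False, False]" "last L = replicate (n - 2) False @ [True, False]"
    unfolding D1 D2 D3 x1 S h1[symmetric] h2[symmetric] using C by simp_all
  show ?thesis using c unfolding gray1_iff by blast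
qed


theorem lemma5:
  fixes n r :: nat and Z :: "nat \<Rightarrow> bool list list"
  assumes "n > 3" and "r mod 4 = 3" and "3 \<le> r" and "r \<le> n"
    and hZ: "\<forall>k<n. gray1 (Z k) (Zset k) \<and> Z k \<noteq> []"
    and hZfl: "\<forall>k. 0 < k \<and> k < n \<longrightarrow>
                 hd (Z k) = fill [False] k \<and> last (Z k) = fill [] k"
  shows
   "(r = 3 \<longrightarrow> (\<exists>L. gray1 L (Dset 3 n) \<and> L \<noteq> [] \<and>
        hd L = fill [False, False, True, False] n \<and> last L = fill [] n))
  \<and> (r \<noteq> 3 \<and> r = n - 2 \<longrightarrow> (\<exists>L. gray1 L (Dset (n - 2) n \<union> Dset (n - 3) n) \<and> L \<noteq> [] \<and>
        hd L = replicate (n - 4) False @ [True, False, False, False] \<and>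
        last L = replicate (n - 3) False @ [True, False, False]))
  \<and> (r \<noteq> 3 \<and> r = n - 1 \<longrightarrow> (\<exists>L.
        gray1 L ((Dset n n \<union> Dset (n - 1) n \<union> Dset (n - 2) n) - {replicate (n - 1) False @ [True]})
        \<and> L \<noteq> [] \<and>
        hd L = replicate (n - 3) False @ [True, False, False] \<and>
        last L = replicate (n - 2) False @ [True, False]))
  \<and> (r \<noteq> 3 \<and> r = n \<longrightarrow> (\<exists>L. gray1 L (Dset n n \<union> Dset (n - 1) n) \<and> L \<noteq> [] \<and>
        hd L = replicate (n - 2) False @ [True, False] \<and>
        last L = replicate (n - 1) False @ [True]))
  \<and> (r \<notin> {3, n - 2, n - 1, n} \<longrightarrow> (\<exists>L. gray1 L (Dset r n \<union> Dset (r - 1) n) \<and> L \<noteq> [] \<and>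
        hd L = fill (replicate (r - 1) False @ [True, False]) n \<and>
        last L = fill (replicate (r - 1) False @ [True]) n))"
proof -
  have r7: "r \<noteq> 3 \<Longrightarrow> 7 \<le> r" using assms(2,3) by presburger
  have P1: "r = 3 \<longrightarrow> (\<exists>L. gray1 L (Dset 3 n) \<and> L \<noteq> [] \<and>
        hd L = fill [False, False, True, False] n \<and> last L = fill [] n)"
    using thm_i[OF hZ hZfl assms(1)] by blast
  have P2: "r \<noteq> 3 \<and> r = n - 2 \<longrightarrow> (\<exists>L. gray1 L (Dset (n - 2) n \<union> Dset (n - 3) n) \<and> L \<noteq> [] \<and>
        hd L = replicate (n - 4) False @ [True, False, False, False] \<and>
        last L = replicate (n - 3) False @ [True, False, False])"
  proof
    assume a: "r \<noteq> 3 \<and> r = n - 2"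
    show "\<exists>L. gray1 L (Dset (n - 2) n \<union> Dset (n - 3) n) \<and> L \<noteq> [] \<and>
        hd L = replicate (n - 4) False @ [True, False, False, False] \<and>
        last L = replicate (n - 3) False @ [True, False, False]"
      by (rule thm_ii[OF hZ hZfl]) (use a r7 assms in auto)
  qed
  have P3: "r \<noteq> 3 \<and> r = n - 1 \<longrightarrow> (\<exists>L.
        gray1 L ((Dset n n \<union> Dset (n - 1) n \<union> Dset (n - 2) n) - {replicate (n - 1) False @ [True]})
        \<and> L \<noteq> [] \<and>
        hd L = replicate (n - 3) False @ [True, False, False] \<and>
        last L = replicate (n - 2) False @ [True, False])"
  proof
    assume a: "r \<noteq> 3 \<and> r = n - 1"
    have n: "n = r + 1" using a assms by simp
    have "n mod 4 = 0" "8 \<le> n" using n r7 a assms(2) by presburger+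
    then show "\<exists>L.
        gray1 L ((Dset n n \<union> Dset (n - 1) n \<union> Dset (n - 2) n) - {replicate (n - 1) False @ [True]})
        \<and> L \<noteq> [] \<and>
        hd L = replicate (n - 3) False @ [True, False, False] \<and>
        last L = replicate (n - 2) False @ [True, False]"
      by (rule thm_iii[OF hZ hZfl])
  qed
  have P4: "r \<noteq> 3 \<and> r = n \<longrightarrow> (\<exists>L. gray1 L (Dset n n \<union> Dset (n - 1) n) \<and> L \<noteq> [] \<and>
        hd L = replicate (n - 2) False @ [True, False] \<and>
        last L = replicate (n - 1) False @ [True])"
  proof
    assume a: "r \<noteq> 3 \<and> r = n"
    have "n mod 4 = 3" "7 \<le> n" using a r7 assms(2) by auto
    then show "\<exists>L. gray1 L (Dset n n \<union> Dset (n - 1) n) \<and> L \<noteq> [] \<and>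
        hd L = replicate (n - 2) False @ [True, False] \<and>
        last L = replicate (n - 1) False @ [True]"
      by (rule thm_iv[OF hZ hZfl])
  qed
  have P5: "r \<notin> {3, n - 2, n - 1, n} \<longrightarrow> (\<exists>L. gray1 L (Dset r n \<union> Dset (r - 1) n) \<and> L \<noteq> [] \<and>
        hd L = fill (replicate (r - 1) False @ [True, False]) n \<and>
        last L = fill (replicate (r - 1) False @ [True]) n)"
  proof
    assume a: "r \<notin> {3, n - 2, n - 1, n}"
    have "7 \<le> r" "r + 3 \<le> n" using a r7 assms(1,4) by auto
    then show "\<exists>L. gray1 L (Dset r n \<union> Dset (r - 1) n) \<and> L \<noteq> [] \<and>
        hd L = fill (replicate (r - 1) False @ [True, False]) n \<and>
        last L = fill (replicate (r - 1) False @ [True]) n"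
      by (rule thm_v[OF hZ hZfl assms(2)])
  qed
  show ?thesis using P1 P2 P3 P4 P5 by blast
qed

end
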